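(* Let $S$ be an additively cancellative, semisubtractive, centrally essential semiring with center $C=C(S)$. The following conditions are equivalent: (1) $S$ is a semiprime semiring; (2) $C$ is a semiprime semiring; (3) $S$ has no non-zero nilpotent elements; (4) $S$ is a commutative semiring without non-zero nilpotent elements.
   Context: A semiring is a set $S$ with two binary operations $+$ and $\cdot$ such that $(S,+)$ is a commutative monoid with neutral element $0$, $(S,\cdot)$ is a monoid with identity $1$, multiplication distributes over addition on both sides, and $0s=s0=0$ for all $s\in S$. The center is $C(S)=\{s\in S: ss'=s's \text{ for all } s'\in S\}$, a subsemiring. $S$ is centrally essential if for every non-zero $x\in S$ there exist non-zero $y,z\in C(S)$ with $xy=z$. $S$ is additively cancellative if $x+z=y+z$ implies $x=y$. $S$ is semisubtractive if for all $a\neq b$ in $S$ there exists $x\in S$ with $a+x=b$ or $b+x=a$. A semiring is semiprime if it has no non-zero nilpotent ideals. *)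

theory Defs
  imports Main
begin

text \<open>Semirings: type class semiring_0 (commutative additive monoid, associative
multiplication, two-sided distributivity, absorbing zero) together with
monoid_mult (multiplicative identity). 0 = 1 is not excluded, as in the paper.\<close>

definition center :: "'a::{semiring_0,monoid_mult} set" where
  "center = {s. \<forall>t. s * t = t * s}"

definition centrally_essential :: "'a::{semiring_0,monoid_mult} itself \<Rightarrow> bool" where
  "centrally_essential _ \<longleftrightarrow>
     (\<forall>x::'a. x \<noteq> 0 \<longrightarrow> (\<exists>y z. y \<in> center \<and> z \<in> center \<and> y \<noteq> 0 \<and> z \<noteq> 0 \<and> x * y = z))"

definition add_cancellative :: "'a::{semiring_0,monoid_mult} itself \<Rightarrow> bool" where
  "add_cancellative _ \<longleftrightarrow> (\<forall>x y z::'a. x + z = y + z \<longrightarrow> x = y)"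

definition semisubtractive :: "'a::{semiring_0,monoid_mult} itself \<Rightarrow> bool" where
  "semisubtractive _ \<longleftrightarrow> (\<forall>a b::'a. a \<noteq> b \<longrightarrow> (\<exists>x. a + x = b \<or> b + x = a))"

definition ideal_in :: "'a::{semiring_0,monoid_mult} set \<Rightarrow> 'a set \<Rightarrow> bool" where
  "ideal_in R I \<longleftrightarrow> I \<subseteq> R \<and> 0 \<in> I \<and> (\<forall>x\<in>I. \<forall>y\<in>I. x + y \<in> I)
     \<and> (\<forall>r\<in>R. \<forall>x\<in>I. r * x \<in> I \<and> x * r \<in> I)"

text \<open>I is nilpotent: I^n = 0 for some n \<ge> 1, i.e. every product of n elements of I is 0
(I^n is additively generated by such products).\<close>
definition nilpotent_ideal :: "'a::{semiring_0,monoid_mult} set \<Rightarrow> bool" where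
  "nilpotent_ideal I \<longleftrightarrow>
     (\<exists>n\<ge>1. \<forall>xs. length xs = n \<and> set xs \<subseteq> I \<longrightarrow> prod_list xs = 0)"

definition semiprime_on :: "'a::{semiring_0,monoid_mult} set \<Rightarrow> bool" where
  "semiprime_on R \<longleftrightarrow> (\<forall>I. ideal_in R I \<and> nilpotent_ideal I \<longrightarrow> I = {0})"

definition no_nonzero_nilpotents :: "'a::{semiring_0,monoid_mult} itself \<Rightarrow> bool" where
  "no_nonzero_nilpotents _ \<longleftrightarrow> (\<forall>x::'a. (\<exists>n. x ^ n = 0) \<longrightarrow> x = 0)"

definition commutative_mult :: "'a::{semiring_0,monoid_mult} itself \<Rightarrow> bool" where
  "commutative_mult _ \<longleftrightarrow> (\<forall>x y::'a. x * y = y * x)"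

end

theory Submission
  imports Defs
begin

lemma prod_rep: "prod_list (replicate n (x::'a::monoid_mult)) = x ^ n"
  by (induction n) auto

lemma cen_comm:
  assumes "c \<in> (center::'a::{semiring_0,monoid_mult} set)"
  shows "s * c = c * s"
proof -
  from assms have "\<forall>t. c * t = t * c" unfolding center_def by (rule CollectD)
  then show ?thesis by metis
qed

lemma in_centerI:
  assumes "\<And>t. c * t = t * (c::'a::{semiring_0,monoid_mult})"
  shows "c \<in> center"
  unfolding center_def using assms by (rule CollectI[of "\<lambda>s. \<forall>t. s * t = t * s", OF allI])

lemma L_red:
  assumes "no_nonzero_nilpotents TYPE('a::{semiring_0,monoid_mult})"
  shows "semiprime_on (R :: 'a set)"
  unfolding semiprime_on_def
proof (intro allI impI)
  fix I :: "'a set" assume h: "ideal_in R I \<and> nilpotent_ideal I"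
  then have "nilpotent_ideal I" by (rule conjunct2)
  then obtain n where n: "\<forall>xs. length xs = n \<and> set xs \<subseteq> I \<longrightarrow> prod_list xs = 0"
    unfolding nilpotent_ideal_def by blast
  have "x = 0" if xI: "x \<in> I" for x
  proof -
    have s: "set (replicate n x) \<subseteq> I" using xI by (simp add: set_replicate_conv_if)
    have "length (replicate n x) = n" by (rule length_replicate)
    with s n have "prod_list (replicate n x) = 0" by blast
    then have "x ^ n = 0" by (simp only: prod_rep)
    then show ?thesis using assms unfolding no_nonzero_nilpotents_def by blast
  qed
  moreover have "0 \<in> I" using h unfolding ideal_in_def by blast
  ultimately show "I = {0}" by blast
qed

lemma central_pow_comm:
  assumes "c \<in> center"
  shows "(s::'a::{semiring_0,monoid_mult}) * c ^ k = c ^ k * s"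
proof (induction k)
  case 0 then show ?case by simp
next
  case (Suc k)
  have cs: "s * c = c * s" using assms by (rule cen_comm)
  have "s * c ^ Suc k = (s * c) * c ^ k" by (simp add: power_Suc mult.assoc)
  also have "\<dots> = c * (s * c ^ k)" by (simp add: cs mult.assoc)
  also have "\<dots> = c ^ Suc k * s" using Suc by (simp add: power_Suc mult.assoc)
  finally show ?case .
qed

lemma prod_list_form:
  assumes "c \<in> center" "set xs \<subseteq> {c * t |t. t \<in> R}" "(1::'a) \<in> R"
    and "\<forall>a\<in>R. \<forall>b\<in>R. a * b \<in> R"
  shows "\<exists>t\<in>R. prod_list xs = (c::'a::{semiring_0,monoid_mult}) ^ length xs * t"
  using assms(2)
proof (induction xs)
  case Nil then show ?case using assms(3) by auto
next
  case (Cons x xs)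
  then obtain t where t: "t \<in> R" "prod_list xs = c ^ length xs * t" by auto
  obtain s where s: "s \<in> R" "x = c * s" using Cons.prems by auto
  have "prod_list (x # xs) = c * s * (c ^ length xs * t)" using s t by simp
  also have "\<dots> = c * (s * c ^ length xs) * t" by (simp add: mult.assoc)
  also have "\<dots> = c ^ length (x # xs) * (s * t)"
    using central_pow_comm[OF assms(1), of s "length xs"]
    by (simp add: mult.assoc[symmetric] power_commutes)
  finally show ?case using s t assms(4) by blast
qed

lemma L_semi:
  assumes sp: "semiprime_on R"
    and cl: "\<forall>a\<in>R. \<forall>b\<in>R. a + b \<in> R" "\<forall>a\<in>R. \<forall>b\<in>R. a * b \<in> R" "(0::'a) \<in> R" "1 \<in> R"
    and c: "c \<in> R" "c \<in> center" "(c::'a::{semiring_0,monoid_mult}) ^ n = 0"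
  shows "c = 0"
proof -
  define I where "I = {c * t |t. t \<in> R}"
  have cc: "\<And>s. s * c = c * s" using c(2) by (rule cen_comm)
  have i1: "I \<subseteq> R" unfolding I_def using cl c by auto
  have i2: "0 \<in> I"
  proof -
    have "(0::'a) = c * 0" by simp
    then show ?thesis unfolding I_def using cl(3) by blast
  qed
  have i3: "x + y \<in> I" if xy: "x \<in> I" "y \<in> I" for x y
  proof -
    obtain a where a: "a \<in> R" "x = c * a" using xy(1) unfolding I_def by blast
    obtain b where b: "b \<in> R" "y = c * b" using xy(2) unfolding I_def by blast
    have "x + y = c * (a + b)" using a b by (simp add: distrib_left)
    moreover have "a + b \<in> R" using a b cl by blast
    ultimately show ?thesis unfolding I_def by blast
  qed
  have i4: "r * x \<in> I \<and> x * r \<in> I" if r: "r \<in> R" and xI: "x \<in> I" for r x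
  proof -
    obtain a where a: "a \<in> R" "x = c * a" using xI unfolding I_def by blast
    have "r * x = (r * c) * a" using a by (simp add: mult.assoc)
    also have "\<dots> = (c * r) * a" using cc[of r] by (rule arg_cong)
    also have "\<dots> = c * (r * a)" by (rule mult.assoc)
    finally have "r * x = c * (r * a)" .
    moreover have "x * r = c * (a * r)" using a by (simp add: mult.assoc)
    ultimately show ?thesis using r a cl unfolding I_def by blast
  qed
  have "ideal_in R I" unfolding ideal_in_def using i1 i2 i3 i4 by blast
  moreover have "nilpotent_ideal I"
    unfolding nilpotent_ideal_def
  proof (intro exI[of _ "Suc n"] conjI allI impI)
    show "Suc n \<ge> 1" by simp
  next
    fix xs :: "'a list" assume h: "length xs = Suc n \<and> set xs \<subseteq> I"
    have "set xs \<subseteq> {c * t |t. t \<in> R}" using h I_def by simp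
    from prod_list_form[OF c(2) this cl(4) cl(2)] obtain t where
      "prod_list xs = c ^ length xs * t" by blast
    moreover have "length xs = Suc n" using h by blast
    ultimately have "prod_list xs = c ^ Suc n * t" by simp
    moreover have "c ^ Suc n = 0" by (metis c(3) power_Suc2 mult_zero_left)
    ultimately show "prod_list xs = 0" by simp
  qed
  ultimately have "ideal_in R I \<and> nilpotent_ideal I" by blast
  then have "I = {0}" using sp unfolding semiprime_on_def by blast
  moreover have "c \<in> I"
  proof -
    have "c = c * 1" by simp
    then show ?thesis unfolding I_def using cl(4) by blast
  qed
  ultimately show ?thesis by blast
qed

lemma pow_central_mult:
  assumes "y \<in> center"
  shows "((x::'a::{semiring_0,monoid_mult}) * y) ^ n = x ^ n * y ^ n"
proof (induction n)
  case 0 then show ?case by simp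
next
  case (Suc n)
  have "(x * y) ^ Suc n = x * y * (x ^ n * y ^ n)" using Suc by simp
  also have "\<dots> = x * (y * x ^ n) * y ^ n" by (simp add: mult.assoc)
  also have "\<dots> = x * (x ^ n * y) * y ^ n"
  proof -
    have "y * x ^ n = x ^ n * y" using assms by (rule cen_comm[symmetric])
    then show ?thesis by simp
  qed
  also have "\<dots> = x ^ Suc n * y ^ Suc n" by (simp add: mult.assoc power_Suc)
  finally show ?case .
qed

lemma L_nil:
  assumes ce: "centrally_essential TYPE('a::{semiring_0,monoid_mult})"
    and cr: "\<forall>c::'a. \<forall>n. c \<in> center \<and> c ^ n = 0 \<longrightarrow> c = 0"
  shows "no_nonzero_nilpotents TYPE('a)"
  unfolding no_nonzero_nilpotents_def
proof (intro allI impI)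
  fix x :: 'a assume "\<exists>n. x ^ n = 0"
  then obtain n where n: "x ^ n = 0" by blast
  show "x = 0"
  proof (rule ccontr)
    assume "x \<noteq> 0"
    then obtain y z where yz: "y \<in> center" "z \<in> center" "z \<noteq> 0" "x * y = z"
      using ce unfolding centrally_essential_def by blast
    have "z ^ n = 0" using pow_central_mult[OF yz(1), of x n] n yz(4) by simp
    then show False using cr yz by blast
  qed
qed

lemma center_closed:
  "\<forall>a\<in>center. \<forall>b\<in>center. a + b \<in> (center::'a::{semiring_0,monoid_mult} set)"
  "\<forall>a\<in>center. \<forall>b\<in>center. a * b \<in> (center::'a set)"
  "(0::'a) \<in> center" "(1::'a) \<in> center"
proof -
  show "\<forall>a\<in>center. \<forall>b\<in>center. a + b \<in> (center::'a set)"
  proof (intro ballI in_centerI)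
    fix a b t :: 'a assume "a \<in> center" "b \<in> center"
    then have "a * t = t * a" "b * t = t * b" by (simp_all add: cen_comm)
    then show "(a + b) * t = t * (a + b)" by (simp add: distrib_left distrib_right)
  qed
  show "\<forall>a\<in>center. \<forall>b\<in>center. a * b \<in> (center::'a set)"
  proof (intro ballI in_centerI)
    fix a b t :: 'a assume "a \<in> center" "b \<in> center"
    then have 1: "a * t = t * a" "b * t = t * b" by (simp_all add: cen_comm)
    have "a * b * t = a * (t * b)" using 1(2) by (simp add: mult.assoc)
    also have "\<dots> = (a * t) * b" by (simp add: mult.assoc)
    also have "\<dots> = t * (a * b)" using 1(1) by (simp add: mult.assoc)
    finally show "a * b * t = t * (a * b)" .
  qed
  show "(0::'a) \<in> center" "(1::'a) \<in> center" by (auto intro: in_centerI)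
qed

lemma L_comm_aux:
  assumes ce: "centrally_essential TYPE('a::{semiring_0,monoid_mult})"
    and ac: "add_cancellative TYPE('a)"
    and red: "no_nonzero_nilpotents TYPE('a)"
    and eq: "a * b + x = b * (a::'a)"
  shows "x = 0"
proof (rule ccontr)
  have rd: "w = 0" if "w * w = 0" for w :: 'a
  proof -
    have "w ^ 2 = 0" using that by (simp add: power2_eq_square)
    then show ?thesis using red unfolding no_nonzero_nilpotents_def by blast
  qed
  have canc: "p = q" if "p + r = q + r" for p q r :: 'a
    using ac that unfolding add_cancellative_def by blast
  have cen: "s * c = c * s" if "c \<in> center" for c s :: 'a
    using that by (rule cen_comm)
  assume "x \<noteq> 0"
  then obtain c1 z where cz: "c1 \<in> center" "z \<in> center" "z \<noteq> 0" "x * c1 = z"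
    using ce unfolding centrally_essential_def by blast
  define b' where "b' = b * c1"
  have e1: "a * b' + z = b' * a"
  proof -
    have "(a * b + x) * c1 = (b * a) * c1" using eq by simp
    then have "a * b * c1 + x * c1 = b * a * c1" by (simp only: distrib_right)
    moreover have "a * b * c1 = a * b'" by (simp add: b'_def mult.assoc)
    moreover have "b * a * c1 = b' * a"
    proof -
      have "b * a * c1 = b * (a * c1)" by (simp add: mult.assoc)
      also have "\<dots> = b * (c1 * a)" using cen[OF cz(1), of a] by simp
      also have "\<dots> = b' * a" by (simp add: b'_def mult.assoc)
      finally show ?thesis .
    qed
    ultimately show ?thesis using cz(4) by simp
  qed
  have za: "z * a = a * z" using cen[OF cz(2), of a] by simp
  have zb: "z * b' = b' * z" using cen[OF cz(2), of b'] by simp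
  have e2: "(a * z) * b' + z * z = b' * (a * z)"
  proof -
    have "z * (a * b' + z) = z * (b' * a)" using e1 by simp
    then have "z * a * b' + z * z = z * b' * a" by (simp add: distrib_left mult.assoc)
    moreover have "z * a * b' = (a * z) * b'" using za by simp
    moreover have "z * b' * a = b' * (a * z)"
    proof -
      have "z * b' * a = b' * z * a" using zb by simp
      also have "\<dots> = b' * (z * a)" by (simp add: mult.assoc)
      also have "\<dots> = b' * (a * z)" using za by simp
      finally show ?thesis .
    qed
    ultimately show ?thesis by simp
  qed
  show False
  proof (cases "a * z = 0")
    case True
    then have "z * z = 0" using e2 by simp
    then show False using rd cz(3) by blast
  next
    case False
    then obtain c' w where cw: "c' \<in> center" "w \<in> center" "w \<noteq> 0" "a * z * c' = w"
      using ce unfolding centrally_essential_def by blast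
    have "(a * z * b' + z * z) * c' = b' * (a * z) * c'" using e2 by simp
    then have "a * z * b' * c' + z * z * c' = b' * (a * z) * c'"
      by (simp only: distrib_right)
    moreover have "a * z * b' * c' = w * b'"
    proof -
      have "a * z * b' * c' = (a * z) * (b' * c')" by (simp add: mult.assoc)
      also have "\<dots> = (a * z) * (c' * b')" using cen[OF cw(1), of b'] by simp
      also have "\<dots> = (a * z * c') * b'" by (simp add: mult.assoc)
      also have "\<dots> = w * b'" using cw(4) by simp
      finally show ?thesis .
    qed
    moreover have "b' * (a * z) * c' = w * b'"
    proof -
      have "b' * (a * z) * c' = b' * w" using cw(4) by (simp add: mult.assoc)
      also have "\<dots> = w * b'" using cen[OF cw(2), of b'] by simp
      finally show ?thesis .
    qed
    ultimately have "w * b' + z * z * c' = w * b'" by simp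
    then have "z * z * c' + w * b' = 0 + w * b'" by (simp add: add.commute)
    then have zz: "z * z * c' = 0" by (rule canc)
    have zc: "z * c' \<in> center" using center_closed(2) cz(2) cw(1) by blast
    have "w * w = (a * (z * c')) * (a * (z * c'))" using cw(4) by (simp add: mult.assoc)
    also have "\<dots> = a * ((z * c') * a) * (z * c')" by (simp add: mult.assoc)
    also have "\<dots> = a * (a * (z * c')) * (z * c')" using cen[OF zc, of a] by simp
    also have "\<dots> = a * a * (z * (c' * z) * c')" by (simp add: mult.assoc)
    also have "\<dots> = a * a * (z * (z * c') * c')" using cen[OF cw(1), of z] by simp
    also have "\<dots> = a * a * ((z * z * c') * c')" by (simp add: mult.assoc)
    also have "\<dots> = 0" using zz by simp
    finally show False using rd cw(3) by blast
  qed
qed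

lemma L_comm:
  assumes ce: "centrally_essential TYPE('a::{semiring_0,monoid_mult})"
    and ac: "add_cancellative TYPE('a)"
    and ss: "semisubtractive TYPE('a)"
    and red: "no_nonzero_nilpotents TYPE('a)"
  shows "commutative_mult TYPE('a)"
  unfolding commutative_mult_def
proof (intro allI)
  fix a b :: 'a
  show "a * b = b * a"
  proof (rule ccontr)
    assume ne: "a * b \<noteq> b * a"
    then obtain x where "a * b + x = b * a \<or> b * a + x = a * b"
      using ss unfolding semisubtractive_def by blast
    then show False
    proof
      assume h: "a * b + x = b * a"
      then have "x = 0" using L_comm_aux[OF ce ac red h] by simp
      then show False using h ne by simp
    next
      assume h: "b * a + x = a * b"
      then have "x = 0" using L_comm_aux[OF ce ac red h] by simp
      then show False using h ne by simp
    qed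
  qed
qed

theorem proposition2p1:
  assumes "add_cancellative TYPE('a::{semiring_0,monoid_mult})"
    and "semisubtractive TYPE('a)"
    and "centrally_essential TYPE('a)"
  shows "(semiprime_on (UNIV :: 'a set) \<longleftrightarrow> semiprime_on (center :: 'a set))
       \<and> (semiprime_on (center :: 'a set) \<longleftrightarrow> no_nonzero_nilpotents TYPE('a))
       \<and> (no_nonzero_nilpotents TYPE('a) \<longleftrightarrow>
            (commutative_mult TYPE('a) \<and> no_nonzero_nilpotents TYPE('a)))"
proof -
  have A: "no_nonzero_nilpotents TYPE('a)" if h: "semiprime_on (UNIV :: 'a set)"
  proof (rule L_nil[OF assms(3)], intro allI impI)
    fix c :: 'a and n assume "c \<in> center \<and> c ^ n = 0"
    then show "c = 0" using L_semi[OF h, of c n] by simp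
  qed
  have B: "no_nonzero_nilpotents TYPE('a)" if h: "semiprime_on (center :: 'a set)"
  proof (rule L_nil[OF assms(3)], intro allI impI)
    fix c :: 'a and n assume "c \<in> center \<and> c ^ n = 0"
    then show "c = 0" using L_semi[OF h center_closed, of c n] by simp
  qed
  show ?thesis using A B L_red[of "UNIV :: 'a set"] L_red[of "center :: 'a set"]
      L_comm[OF assms(3,1,2)] by blast
qed

end
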